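(* Consider a binary MILP (maximization) solved by branch-and-bound with the worst-bound node selection rule and an LP solver satisfying Assumption 1. Then the branch-and-bound tree never branches on a node whose LP optimal objective value equals the optimal objective value of the MILP.
   Context: Branch-and-bound for a binary MILP $\max\{c^\top x: x\in P,\ x_1,\dots,x_n\in\{0,1\}\}$: each node is the LP relaxation with some binary variables fixed to $0$ or $1$; a node is pruned if its LP is infeasible, if the returned LP solution is integral, or if its LP value is worse than the value of an integral solution already found; the worst-bound rule selects next an open node with the largest LP value. Assumption 1: if the LP at a node has an integral optimal solution, the LP solver returns one. *)

theory Defs
  imports "HOL-Analysis.Analysis"
begin

text \<open>A node of the branch-and-bound tree is a partial fixing
  F :: 'n => bool option (Some True = fixed to 1, Some False = fixed to 0).\<close>

definition binary :: "real^'n \<Rightarrow> bool" where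
  "binary x \<longleftrightarrow> (\<forall>i. x$i = 0 \<or> x$i = 1)"

definition integral_vec :: "real^'n \<Rightarrow> bool" where
  "integral_vec x \<longleftrightarrow> (\<forall>i. x$i \<in> \<int>)"

definition milp_opt :: "real^'n \<Rightarrow> (real^'n) set \<Rightarrow> real^'n \<Rightarrow> bool" where
  "milp_opt c P x \<longleftrightarrow> x \<in> P \<and> binary x \<and> (\<forall>y\<in>P. binary y \<longrightarrow> c \<bullet> y \<le> c \<bullet> x)"

definition lp_feas :: "(real^'n) set \<Rightarrow> ('n \<Rightarrow> bool option) \<Rightarrow> (real^'n) set" where
  "lp_feas P F = {x \<in> P. (\<forall>i. 0 \<le> x$i \<and> x$i \<le> 1) \<and>
                          (\<forall>i v. F i = Some v \<longrightarrow> x$i = (if v then 1 else 0))}"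

definition lp_opt :: "real^'n \<Rightarrow> (real^'n) set \<Rightarrow> ('n \<Rightarrow> bool option) \<Rightarrow> real^'n \<Rightarrow> bool" where
  "lp_opt c P F x \<longleftrightarrow> x \<in> lp_feas P F \<and> (\<forall>y\<in>lp_feas P F. c \<bullet> y \<le> c \<bullet> x)"

text \<open>The LP solver returns an optimal solution; Assumption 1: if the LP has an
  integral optimal solution, the returned one is integral.\<close>
definition lp_solver_ok :: "real^'n \<Rightarrow> (real^'n) set \<Rightarrow> ('n \<Rightarrow> bool option) \<Rightarrow> real^'n \<Rightarrow> bool" where
  "lp_solver_ok c P F x \<longleftrightarrow> lp_opt c P F x \<and>
     ((\<exists>y. lp_opt c P F y \<and> integral_vec y) \<longrightarrow> integral_vec x)"

text \<open>State: set of open nodes and incumbent value (None = no integral solution found).\<close>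
type_synonym 'n bb_state = "('n \<Rightarrow> bool option) set \<times> real option"

definition bb_process ::
  "real^'n \<Rightarrow> (real^'n) set \<Rightarrow> (('n \<Rightarrow> bool option) \<Rightarrow> real^'n) \<Rightarrow>
   ('n \<Rightarrow> bool option) \<Rightarrow> 'n bb_state \<Rightarrow> 'n bb_state" where
  "bb_process c P sol F s =
     (let (Q, inc) = s; v = c \<bullet> sol F in
      if lp_feas P F = {} then (Q, inc)
      else if integral_vec (sol F) then
        (Q, Some (case inc of None \<Rightarrow> v | Some z \<Rightarrow> max z v))
      else if (\<exists>z. inc = Some z \<and> v \<le> z) then (Q, inc)
      else (insert F Q, inc))"

definition bb_init ::
  "real^'n \<Rightarrow> (real^'n) set \<Rightarrow> (('n \<Rightarrow> bool option) \<Rightarrow> real^'n) \<Rightarrow> 'n bb_state" where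
  "bb_init c P sol = bb_process c P sol (\<lambda>_. None) ({}, None)"

text \<open>One iteration: worst-bound selection of an open node of largest LP value; it is
  pruned by bound or branched on a fractional variable (children created in either
  order).  The label is Some F iff the step branches on node F.\<close>
inductive bb_step ::
  "real^'n \<Rightarrow> (real^'n) set \<Rightarrow> (('n \<Rightarrow> bool option) \<Rightarrow> real^'n) \<Rightarrow>
   'n bb_state \<Rightarrow> ('n \<Rightarrow> bool option) option \<Rightarrow> 'n bb_state \<Rightarrow> bool"
  for c P sol where
  prune: "\<lbrakk>F \<in> Q; \<forall>G\<in>Q. c \<bullet> sol G \<le> c \<bullet> sol F; inc = Some z; c \<bullet> sol F \<le> z\<rbrakk>
          \<Longrightarrow> bb_step c P sol (Q, inc) None (Q - {F}, inc)"
| branch: "\<lbrakk>F \<in> Q; \<forall>G\<in>Q. c \<bullet> sol G \<le> c \<bullet> sol F;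
            \<not> (\<exists>z. inc = Some z \<and> c \<bullet> sol F \<le> z); sol F $ i \<notin> \<int>;
            F0 = F(i := Some False); F1 = F(i := Some True);
            s' = (if first1 then bb_process c P sol F0 (bb_process c P sol F1 (Q - {F}, inc))
                  else bb_process c P sol F1 (bb_process c P sol F0 (Q - {F}, inc)))\<rbrakk>
          \<Longrightarrow> bb_step c P sol (Q, inc) (Some F) s'"

inductive bb_reach ::
  "real^'n \<Rightarrow> (real^'n) set \<Rightarrow> (('n \<Rightarrow> bool option) \<Rightarrow> real^'n) \<Rightarrow> 'n bb_state \<Rightarrow> bool"
  for c P sol where
  init: "bb_reach c P sol (bb_init c P sol)"
| step: "\<lbrakk>bb_reach c P sol s; bb_step c P sol s l s'\<rbrakk> \<Longrightarrow> bb_reach c P sol s'"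

end

theory Submission
  imports Defs
begin

definition Wit :: "real^'n \<Rightarrow> (real^'n) set \<Rightarrow> real \<Rightarrow> ('n \<Rightarrow> bool option) \<Rightarrow> bool" where
  "Wit c P zs G \<longleftrightarrow> (\<exists>x\<in>lp_feas P G. binary x \<and> c \<bullet> x = zs)"

definition invab :: "real^'n \<Rightarrow> (real^'n) set \<Rightarrow> (('n \<Rightarrow> bool option) \<Rightarrow> real^'n) \<Rightarrow> real \<Rightarrow> 'n bb_state \<Rightarrow> bool" where
  "invab c P sol zs s \<longleftrightarrow> (\<forall>G\<in>fst s. lp_feas P G \<noteq> {} \<and> \<not> integral_vec (sol G)) \<and>
      (\<forall>z. snd s = Some z \<longrightarrow> z \<le> zs)"

definition good :: "real^'n \<Rightarrow> (real^'n) set \<Rightarrow> real \<Rightarrow> 'n bb_state \<Rightarrow> bool" where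
  "good c P zs s \<longleftrightarrow> snd s = Some zs \<or> (\<exists>G\<in>fst s. Wit c P zs G)"

lemma int01: "(a::real) \<in> \<int> \<Longrightarrow> 0 \<le> a \<Longrightarrow> a \<le> 1 \<Longrightarrow> a = 0 \<or> a = 1"
proof -
  assume "a \<in> \<int>" "0 \<le> a" "a \<le> 1"
  then obtain k where k: "a = of_int k" by (auto elim: Ints_cases)
  with \<open>0 \<le> a\<close> \<open>a \<le> 1\<close> have "0 \<le> k" "k \<le> 1" by auto
  then have "k = 0 \<or> k = 1" by auto
  with k show ?thesis by auto
qed

lemma feas_int_le:
  assumes "milp_opt c P xopt" "x \<in> lp_feas P G" "integral_vec x"
  shows "c \<bullet> x \<le> c \<bullet> xopt"
proof -
  have "binary x" using assms(2,3) int01 unfolding lp_feas_def integral_vec_def binary_def by blast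
  moreover have "x \<in> P" using assms(2) unfolding lp_feas_def by auto
  ultimately show ?thesis using assms(1) unfolding milp_opt_def by auto
qed

lemma process_lemma:
  assumes ok: "\<forall>F. lp_feas P F \<noteq> {} \<longrightarrow> lp_solver_ok c P F (sol F)"
    and mo: "milp_opt c P xopt"
    and zs: "zs = c \<bullet> xopt"
    and inv: "invab c P sol zs s"
  shows "invab c P sol zs (bb_process c P sol F s)"
    and "good c P zs s \<or> Wit c P zs F \<Longrightarrow> good c P zs (bb_process c P sol F s)"
proof -
  obtain Q inc where s: "s = (Q, inc)" by fastforce
  let ?v = "c \<bullet> sol F"
  have vle: "lp_feas P F \<noteq> {} \<Longrightarrow> integral_vec (sol F) \<Longrightarrow> ?v \<le> zs"
    using ok feas_int_le[OF mo] zs unfolding lp_solver_ok_def lp_opt_def by blast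
  have incle: "\<And>z. inc = Some z \<Longrightarrow> z \<le> zs" using inv s unfolding invab_def by auto
  show "invab c P sol zs (bb_process c P sol F s)"
    using inv vle incle unfolding s bb_process_def Let_def invab_def
    by (auto split: option.splits)
  assume g: "good c P zs s \<or> Wit c P zs F"
  show "good c P zs (bb_process c P sol F s)"
  proof (cases "good c P zs s")
    case True
    then show ?thesis using vle incle unfolding s bb_process_def Let_def good_def
      by (auto split: option.splits)
  next
    case False
    with g have w: "Wit c P zs F" by auto
    then obtain x where x: "x \<in> lp_feas P F" "binary x" "c \<bullet> x = zs" unfolding Wit_def by auto
    then have ne: "lp_feas P F \<noteq> {}" by auto
    have ge: "zs \<le> ?v" using ok ne x unfolding lp_solver_ok_def lp_opt_def by auto
    show ?thesis
    proof (cases "integral_vec (sol F)")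
      case True
      then have "?v = zs" using vle ne ge by auto
      then show ?thesis using True ne incle unfolding s bb_process_def Let_def good_def
        by (auto split: option.splits)
    next
      case nI: False
      show ?thesis
      proof (cases "\<exists>z. inc = Some z \<and> ?v \<le> z")
        case True
        then obtain z where "inc = Some z" "?v \<le> z" by auto
        with incle ge have "inc = Some zs" by fastforce
        then show ?thesis using ne nI unfolding s bb_process_def Let_def good_def by auto
      next
        case False
        then show ?thesis using ne nI w unfolding s bb_process_def Let_def good_def by auto
      qed
    qed
  qed
qed

lemma wit_split:
  assumes "Wit c P zs F"
  shows "Wit c P zs (F(i := Some False)) \<or> Wit c P zs (F(i := Some True))"
proof -
  obtain x where x: "x \<in> lp_feas P F" "binary x" "c \<bullet> x = zs" using assms unfolding Wit_def by auto
  have "x$i = 0 \<or> x$i = 1" using x(2) unfolding binary_def by auto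
  then show ?thesis
  proof
    assume "x$i = 0"
    then have "x \<in> lp_feas P (F(i := Some False))" using x(1) unfolding lp_feas_def by auto
    then show ?thesis using x unfolding Wit_def by blast
  next
    assume "x$i = 1"
    then have "x \<in> lp_feas P (F(i := Some True))" using x(1) unfolding lp_feas_def by auto
    then show ?thesis using x unfolding Wit_def by blast
  qed
qed

lemma reach_inv:
  assumes ok: "\<forall>F. lp_feas P F \<noteq> {} \<longrightarrow> lp_solver_ok c P F (sol F)"
    and mo: "milp_opt c P xopt"
    and zs: "zs = c \<bullet> xopt"
    and r: "bb_reach c P sol s"
  shows "invab c P sol zs s \<and> good c P zs s"
  using r
proof induction
  case init
  have i0: "invab c P sol zs ({}, None)" unfolding invab_def by auto
  have "xopt \<in> lp_feas P (\<lambda>_. None)"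
  proof -
    have "\<forall>i. xopt$i = 0 \<or> xopt$i = 1" "xopt \<in> P" using mo unfolding milp_opt_def binary_def by auto
    then show ?thesis unfolding lp_feas_def
    proof -
      note h = \<open>\<forall>i. xopt$i = 0 \<or> xopt$i = 1\<close>
      have "\<forall>i. 0 \<le> xopt$i \<and> xopt$i \<le> 1" using h
        by (metis order.refl zero_le_one)
      then show "xopt \<in> {x \<in> P. (\<forall>i. 0 \<le> x$i \<and> x$i \<le> 1) \<and> (\<forall>i v. None = Some v \<longrightarrow> x$i = (if v then 1 else 0))}"
        using \<open>xopt \<in> P\<close> by simp
    qed
  qed
  then have "Wit c P zs (\<lambda>_. None)" using mo zs unfolding Wit_def milp_opt_def by blast
  then show ?case using process_lemma[OF ok mo zs i0] unfolding bb_init_def by blast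
next
  case (step s l s')
  from step.hyps(2) step.IH show ?case
  proof cases
    case (prune F Q inc z)
    have "invab c P sol zs (Q - {F}, inc)" using step.IH prune unfolding invab_def by auto
    moreover have "good c P zs (Q - {F}, inc)"
    proof -
      have g: "good c P zs (Q, inc)" using step.IH prune by auto
      have zle: "z \<le> zs" using step.IH prune unfolding invab_def by auto
      show ?thesis
      proof (cases "Wit c P zs F")
        case True
        then obtain x where x: "x \<in> lp_feas P F" "c \<bullet> x = zs" unfolding Wit_def by auto
        then have "zs \<le> c \<bullet> sol F" using ok unfolding lp_solver_ok_def lp_opt_def by auto
        then have "z = zs" using prune zle by auto
        then show ?thesis using prune unfolding good_def by auto
      next
        case False
        then show ?thesis using g prune unfolding good_def by auto
      qed
    qed
    ultimately show ?thesis using prune by simp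
  next
    case (branch F Q inc i F0 F1 first1)
    have i1: "invab c P sol zs (Q - {F}, inc)" using step.IH branch unfolding invab_def by auto
    have g1: "good c P zs (Q - {F}, inc) \<or> Wit c P zs F"
      using step.IH branch unfolding good_def by auto
    have gen: "invab c P sol zs (bb_process c P sol A (bb_process c P sol B (Q - {F}, inc))) \<and>
               good c P zs (bb_process c P sol A (bb_process c P sol B (Q - {F}, inc)))"
      if "Wit c P zs F \<Longrightarrow> Wit c P zs A \<or> Wit c P zs B" for A B
    proof -
      have ib: "invab c P sol zs (bb_process c P sol B (Q - {F}, inc))"
        using process_lemma(1)[OF ok mo zs i1] .
      have gb: "good c P zs (bb_process c P sol B (Q - {F}, inc)) \<or> Wit c P zs A"
        using process_lemma(2)[OF ok mo zs i1] g1 that by blast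
      show ?thesis using process_lemma[OF ok mo zs ib] gb by blast
    qed
    show ?thesis using branch gen wit_split by (metis (no_types, lifting))
  qed
qed

theorem mainTheorem8:
  fixes P :: "(real^'n) set" and c :: "real^'n"
    and sol :: "('n \<Rightarrow> bool option) \<Rightarrow> real^'n" and xopt :: "real^'n"
  assumes "polyhedron P"
    and "\<forall>F. lp_feas P F \<noteq> {} \<longrightarrow> lp_solver_ok c P F (sol F)"
    and "milp_opt c P xopt"
    and "bb_reach c P sol s"
    and "bb_step c P sol s (Some F) s'"
  shows "c \<bullet> sol F \<noteq> c \<bullet> xopt"
proof -
  note ok = assms(2) and mo = assms(3)
  have iv: "invab c P sol (c \<bullet> xopt) s \<and> good c P (c \<bullet> xopt) s"
    using reach_inv[OF ok mo refl assms(4)] .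
  from assms(5) show ?thesis
  proof cases
    case (branch Q inc i F0 F1 first1)
    show ?thesis
    proof (cases "inc = Some (c \<bullet> xopt)")
      case True
      then show ?thesis using branch by auto
    next
      case False
      then obtain G where G: "G \<in> Q" "Wit c P (c \<bullet> xopt) G"
        using iv branch unfolding good_def by auto
      obtain x where x: "x \<in> lp_feas P G" "binary x" "c \<bullet> x = c \<bullet> xopt"
        using G(2) unfolding Wit_def by auto
      have ne: "lp_feas P G \<noteq> {}" "\<not> integral_vec (sol G)"
        using iv G branch unfolding invab_def by auto
      have so: "lp_solver_ok c P G (sol G)" using ok ne by auto
      have ge: "c \<bullet> x \<le> c \<bullet> sol G" using so x unfolding lp_solver_ok_def lp_opt_def by auto
      have "c \<bullet> x \<noteq> c \<bullet> sol G"
      proof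
        assume eq: "c \<bullet> x = c \<bullet> sol G"
        have "lp_opt c P G x" using so x eq unfolding lp_solver_ok_def lp_opt_def by auto
        moreover have "integral_vec x" using x(2) unfolding binary_def integral_vec_def by (metis Ints_0 Ints_1)
        ultimately have "integral_vec (sol G)" using so unfolding lp_solver_ok_def by blast
        then show False using ne by auto
      qed
      then have "c \<bullet> xopt < c \<bullet> sol G" using ge x by auto
      moreover have "c \<bullet> sol G \<le> c \<bullet> sol F" using branch G by auto
      ultimately show ?thesis by auto
    qed
  qed
qed

end
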